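(* Consider a run of Algorithm 1 (described in the context). Let $I_j$ be a correcting interval. Then at the time $I_j$ is bisected, $f(I_j)\subset Y_j$.
   Context: Problem. Fix $L>0$ and $T\ge 2$. An adversary fixes an unknown $L$-Lipschitz $f:[0,1]\to[0,L]$. In each round $t=1,\dots,T$: the adversary chooses $x_t\in[0,1]$; the learner observes $x_t$ and guesses $q_t$; the adversary observes $q_t$ and sends $\sigma_t\in\{0,1\}$, equal to $\sigma(q_t-f(x_t))$ in uncorrupted rounds and $1-\sigma(q_t-f(x_t))$ in corrupted rounds, where $\sigma(u)=1$ if $u>0$ and $0$ if $u\le 0$; the adversary chooses adaptively which rounds to corrupt, at most $C$ in total ($C$ unknown to the learner). $\mathtt{len}(I)$ is the length of an interval $I$. $\mathtt{MidpointQuery}(I,Y)$, $Y=[a,b]$: guess $q=(a+b)/2$; if $\sigma_t=1$ return $Y\cap[0,q+L\,\mathtt{len}(I)]$, if $\sigma_t=0$ return $Y\cap[q-L\,\mathtt{len}(I),L]$. Algorithm 1. Maintain a partition of $[0,1]$ into intervals; each $I_j$ carries a checking interval $S_j$, range $Y_j$, and a "dubious" flag (initially unset). Initially: $8$ intervals of length $1/8$ (the root intervals), each with $S_j=Y_j=[0,L]$. In round $t$, with $I_j$ the partition interval containing $x_t$: (i) if some endpoint of $S_j$ has not been guessed in a round whose context lay in $I_j$, guess such an endpoint; if the guess was $\min(S_j)$ with $\sigma_t=1$ or $\max(S_j)$ with $\sigma_t=0$, mark $I_j$ dubious; once both endpoints have been queried, set $Y_j=[0,L]$ if dubious and otherwise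 $Y_j=[\min(S_j)-L\,\mathtt{len}(I_j),\max(S_j)+L\,\mathtt{len}(I_j)]\cap[0,L]$. (ii) Otherwise set $Y_j:=\mathtt{MidpointQuery}(I_j,Y_j)$; if then $\mathtt{len}(Y_j)<\max(4L\,\mathtt{len}(I_j),4L/T)$, bisect $I_j$ into its two halves (its children, of which $I_j$ is the parent), which replace it, each with checking interval equal to the current $Y_j$ (endpoints unqueried, not dubious). Interval types. Say a round $t$ lies in $I_j$ if $I_j$ is the partition interval containing $x_t$ at round $t$. An interval $I_j$ is corrupted if some round lying in $I_j$ has a corrupted signal; it is correcting if its parent is corrupted and every round lying in $I_j$ is uncorrupted; it is safe if it is a root interval or its parent is safe or correcting, and every round lying in $I_j$ is uncorrupted. *)

theory Defs
  imports "HOL-Analysis.Analysis"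
begin

text \<open>Model of Algorithm 1.  A partition interval is the dyadic interval
  [idx/2^dep, (idx+1)/2^dep]; root intervals have dep = 3.  Each node carries its
  checking interval S = [smin, smax], its range Y = [ylo, yhi], flags recording
  whether min S / max S have been guessed in a round lying in it, and the dubious flag.\<close>

record node =
  dep  :: nat
  idx  :: nat
  smin :: real
  smax :: real
  ylo  :: real
  yhi  :: real
  qmin :: bool
  qmax :: bool
  dub  :: bool

definition ivlo :: "node \<Rightarrow> real" where
  "ivlo N = real (idx N) / 2 ^ dep N"

definition ivhi :: "node \<Rightarrow> real" where
  "ivhi N = real (Suc (idx N)) / 2 ^ dep N"

definition ivlen :: "node \<Rightarrow> real" where
  "ivlen N = ivhi N - ivlo N"

definition ival :: "node \<Rightarrow> real set" where
  "ival N = {ivlo N .. ivhi N}"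

definition contains :: "node \<Rightarrow> real \<Rightarrow> bool" where
  "contains N z \<longleftrightarrow> ivlo N \<le> z \<and> (z < ivhi N \<or> ivhi N = 1)"

definition signal :: "(real \<Rightarrow> real) \<Rightarrow> bool \<Rightarrow> real \<Rightarrow> real \<Rightarrow> bool" where
  "signal f cor z q = ((q - f z > 0) \<noteq> cor)"

definition init_part :: "real \<Rightarrow> node list" where
  "init_part L = map (\<lambda>k. \<lparr>dep = 3, idx = k, smin = 0, smax = L, ylo = 0, yhi = L,
                             qmin = False, qmax = False, dub = False\<rparr>) [0..<8]"

text \<open>Returns the updated node and whether it is bisected.  The boolean ch selects,
  when both endpoints of S are still unqueried, whether min S is guessed first.\<close>
definition process :: "real \<Rightarrow> nat \<Rightarrow> (real \<Rightarrow> real) \<Rightarrow> real \<Rightarrow> bool \<Rightarrow> bool \<Rightarrow> node \<Rightarrow> node \<times> bool" where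
  "process L T f z cor ch N =
    (if \<not> (qmin N \<and> qmax N) then
       (let q = (if \<not> qmin N \<and> (qmax N \<or> ch) then smin N else smax N);
            s = signal f cor z q;
            qm = (qmin N \<or> q = smin N);
            qM = (qmax N \<or> q = smax N);
            d = (dub N \<or> (q = smin N \<and> s) \<or> (q = smax N \<and> \<not> s));
            N1 = N\<lparr>qmin := qm, qmax := qM, dub := d\<rparr>
        in (if qm \<and> qM then
              (if d then N1\<lparr>ylo := 0, yhi := L\<rparr>
               else N1\<lparr>ylo := max (smin N - L * ivlen N) 0,
                       yhi := min (smax N + L * ivlen N) L\<rparr>)
            else N1, False))
     else
       (let q = (ylo N + yhi N) / 2;
            s = signal f cor z q;
            N1 = (if s then N\<lparr>ylo := max (ylo N) 0, yhi := min (yhi N) (q + L * ivlen N)\<rparr>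
                  else N\<lparr>ylo := max (ylo N) (q - L * ivlen N), yhi := min (yhi N) L\<rparr>)
        in (N1, yhi N1 - ylo N1 < max (4 * L * ivlen N) (4 * L / real T))))"

definition children :: "node \<Rightarrow> node list" where
  "children N =
     [\<lparr>dep = Suc (dep N), idx = 2 * idx N, smin = ylo N, smax = yhi N, ylo = ylo N, yhi = yhi N,
       qmin = False, qmax = False, dub = False\<rparr>,
      \<lparr>dep = Suc (dep N), idx = 2 * idx N + 1, smin = ylo N, smax = yhi N, ylo = ylo N, yhi = yhi N,
       qmin = False, qmax = False, dub = False\<rparr>]"

definition step :: "real \<Rightarrow> nat \<Rightarrow> (real \<Rightarrow> real) \<Rightarrow> real \<Rightarrow> bool \<Rightarrow> bool \<Rightarrow> node list \<Rightarrow> node list" where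
  "step L T f z cor ch P =
    (case find (\<lambda>N. contains N z) P of
       None \<Rightarrow> P
     | Some N \<Rightarrow>
         (let (N', b) = process L T f z cor ch N
          in concat (map (\<lambda>M. if (dep M, idx M) = (dep N, idx N)
                               then (if b then children N' else [N']) else [M]) P)))"

text \<open>Run: rounds are 1,2,...; x t is the context, c t says whether round t is corrupted,
  ch t is the learner's tie-breaking choice.  run t is the partition after round t.\<close>
primrec run :: "real \<Rightarrow> nat \<Rightarrow> (real \<Rightarrow> real) \<Rightarrow> (nat \<Rightarrow> real) \<Rightarrow> (nat \<Rightarrow> bool) \<Rightarrow> (nat \<Rightarrow> bool) \<Rightarrow> nat \<Rightarrow> node list" where
  "run L T f x c ch 0 = init_part L"
| "run L T f x c ch (Suc t) = step L T f (x (Suc t)) (c (Suc t)) (ch (Suc t)) (run L T f x c ch t)"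

text \<open>The partition interval containing x t at round t (t \<ge> 1).\<close>
definition cur :: "real \<Rightarrow> nat \<Rightarrow> (real \<Rightarrow> real) \<Rightarrow> (nat \<Rightarrow> real) \<Rightarrow> (nat \<Rightarrow> bool) \<Rightarrow> (nat \<Rightarrow> bool) \<Rightarrow> nat \<Rightarrow> node" where
  "cur L T f x c ch t = the (find (\<lambda>N. contains N (x t)) (run L T f x c ch (t - 1)))"

definition lies :: "real \<Rightarrow> nat \<Rightarrow> (real \<Rightarrow> real) \<Rightarrow> (nat \<Rightarrow> real) \<Rightarrow> (nat \<Rightarrow> bool) \<Rightarrow> (nat \<Rightarrow> bool) \<Rightarrow> nat \<Rightarrow> nat \<times> nat" where
  "lies L T f x c ch t = (dep (cur L T f x c ch t), idx (cur L T f x c ch t))"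

definition corrupted_iv :: "real \<Rightarrow> nat \<Rightarrow> (real \<Rightarrow> real) \<Rightarrow> (nat \<Rightarrow> real) \<Rightarrow> (nat \<Rightarrow> bool) \<Rightarrow> (nat \<Rightarrow> bool) \<Rightarrow> nat \<times> nat \<Rightarrow> bool" where
  "corrupted_iv L T f x c ch I \<longleftrightarrow> (\<exists>t\<in>{1..T}. lies L T f x c ch t = I \<and> c t)"

definition parent_iv :: "nat \<times> nat \<Rightarrow> nat \<times> nat" where
  "parent_iv I = (fst I - 1, snd I div 2)"

definition correcting_iv :: "real \<Rightarrow> nat \<Rightarrow> (real \<Rightarrow> real) \<Rightarrow> (nat \<Rightarrow> real) \<Rightarrow> (nat \<Rightarrow> bool) \<Rightarrow> (nat \<Rightarrow> bool) \<Rightarrow> nat \<times> nat \<Rightarrow> bool" where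
  "correcting_iv L T f x c ch I \<longleftrightarrow>
     fst I > 3 \<and> corrupted_iv L T f x c ch (parent_iv I) \<and>
     (\<forall>t\<in>{1..T}. lies L T f x c ch t = I \<longrightarrow> \<not> c t)"

definition upd :: "real \<Rightarrow> nat \<Rightarrow> (real \<Rightarrow> real) \<Rightarrow> (nat \<Rightarrow> real) \<Rightarrow> (nat \<Rightarrow> bool) \<Rightarrow> (nat \<Rightarrow> bool) \<Rightarrow> nat \<Rightarrow> node \<times> bool" where
  "upd L T f x c ch t = process L T f (x t) (c t) (ch t) (cur L T f x c ch t)"

end

theory Submission
  imports Defs
begin

definition good :: "real \<Rightarrow> (real \<Rightarrow> real) \<Rightarrow> node \<Rightarrow> bool" where
  "good L f N \<longleftrightarrow>
     (qmin N \<and> \<not> dub N \<longrightarrow> (\<exists>z\<in>ival N. smin N \<le> f z)) \<and>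
     (qmax N \<and> \<not> dub N \<longrightarrow> (\<exists>z\<in>ival N. f z \<le> smax N)) \<and>
     (qmin N \<and> qmax N \<longrightarrow> (\<forall>u\<in>ival N. ylo N \<le> f u \<and> f u \<le> yhi N))"

lemma process_coords:
  "dep (fst (process L T f z cor ch N)) = dep N \<and> idx (fst (process L T f z cor ch N)) = idx N"
  unfolding process_def Let_def by auto

lemma process_flags:
  "qmin N \<and> qmax N \<Longrightarrow> qmin (fst (process L T f z cor ch N)) \<and> qmax (fst (process L T f z cor ch N))"
  unfolding process_def Let_def by auto

lemma process_nobis:
  "snd (process L T f z cor ch N) \<Longrightarrow> qmin N \<and> qmax N"
  unfolding process_def Let_def by (auto split: if_splits)

lemma ival_coords: "dep M = dep N \<Longrightarrow> idx M = idx N \<Longrightarrow> ival M = ival N"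
  unfolding ival_def ivlo_def ivhi_def by simp

lemma lip_ival:
  assumes L: "L > 0"
    and lip: "\<forall>u\<in>{0..1}. \<forall>v\<in>{0..1}. \<bar>f u - f v\<bar> \<le> L * \<bar>u - v\<bar>"
    and sub: "ival N \<subseteq> {0..1}" and u: "u \<in> ival N" and v: "v \<in> ival N"
  shows "\<bar>f u - f v\<bar> \<le> L * ivlen N"
proof -
  have "\<bar>u - v\<bar> \<le> ivlen N" using u v unfolding ival_def ivlen_def by auto
  moreover have "\<bar>f u - f v\<bar> \<le> L * \<bar>u - v\<bar>" using lip sub u v by blast
  ultimately show ?thesis using L by (smt (verit) mult_left_mono)
qed

lemma process_good:
  assumes L: "L > 0"
    and lip: "\<forall>u\<in>{0..1}. \<forall>v\<in>{0..1}. \<bar>f u - f v\<bar> \<le> L * \<bar>u - v\<bar>"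
    and rng: "\<forall>u\<in>{0..1}. f u \<in> {0..L}"
    and sub: "ival N \<subseteq> {0..1}" and zin: "z \<in> ival N"
    and g: "good L f N" and nc: "\<not> cor"
  shows "good L f (fst (process L T f z cor ch N))"
proof -
  have lipN: "\<And>u v. u \<in> ival N \<Longrightarrow> v \<in> ival N \<Longrightarrow> \<bar>f u - f v\<bar> \<le> L * ivlen N"
    using lip_ival[OF L lip sub] by blast
  have rngN: "\<And>u. u \<in> ival N \<Longrightarrow> 0 \<le> f u \<and> f u \<le> L" using rng sub by auto
  have sig: "\<And>q. signal f cor z q = (q - f z > 0)" using nc unfolding signal_def by simp
  show ?thesis
  proof (cases "qmin N \<and> qmax N")
    case True
    define q where "q = (ylo N + yhi N) / 2"
    have Y: "\<forall>u\<in>ival N. ylo N \<le> f u \<and> f u \<le> yhi N" using g True unfolding good_def by blast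
    show ?thesis
    proof (cases "q - f z > 0")
      case True2: True
      have e: "fst (process L T f z cor ch N) = N\<lparr>ylo := max (ylo N) 0, yhi := min (yhi N) (q + L * ivlen N)\<rparr>"
        using True True2 sig unfolding process_def Let_def q_def by simp
      have "\<forall>u\<in>ival N. f u \<le> q + L * ivlen N"
        using lipN[OF _ zin] True2 by (smt (verit))
      then show ?thesis using g Y rngN unfolding e good_def ival_def ivlo_def ivhi_def by auto
    next
      case False2: False
      have e: "fst (process L T f z cor ch N) = N\<lparr>ylo := max (ylo N) (q - L * ivlen N), yhi := min (yhi N) L\<rparr>"
        using True False2 sig unfolding process_def Let_def q_def by simp
      have "\<forall>u\<in>ival N. q - L * ivlen N \<le> f u"
        using lipN[OF _ zin] False2 by (smt (verit))
      then show ?thesis using g Y rngN unfolding e good_def ival_def ivlo_def ivhi_def by auto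
    qed
  next
    case False
    define q where "q = (if \<not> qmin N \<and> (qmax N \<or> ch) then smin N else smax N)"
    define s where "s = (q - f z > 0)"
    define qm where "qm = (qmin N \<or> q = smin N)"
    define qM where "qM = (qmax N \<or> q = smax N)"
    define d where "d = (dub N \<or> (q = smin N \<and> s) \<or> (q = smax N \<and> \<not> s))"
    define N1 where "N1 = N\<lparr>qmin := qm, qmax := qM, dub := d\<rparr>"
    have e: "fst (process L T f z cor ch N) =
      (if qm \<and> qM then
              (if d then N1\<lparr>ylo := 0, yhi := L\<rparr>
               else N1\<lparr>ylo := max (smin N - L * ivlen N) 0,
                       yhi := min (smax N + L * ivlen N) L\<rparr>)
            else N1)"
      using False sig unfolding process_def Let_def q_def s_def qm_def qM_def d_def N1_def
      by simp
    have iv1: "ival N1 = ival N" unfolding N1_def ival_def ivlo_def ivhi_def by simp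
    have G1: "qmin N1 \<and> \<not> dub N1 \<longrightarrow> (\<exists>z\<in>ival N. smin N \<le> f z)"
    proof
      assume h: "qmin N1 \<and> \<not> dub N1"
      hence h1: "\<not> dub N" "\<not> (q = smin N \<and> s)" "qmin N \<or> q = smin N"
        unfolding N1_def d_def qm_def by auto
      show "\<exists>z\<in>ival N. smin N \<le> f z"
      proof (cases "qmin N")
        case True then show ?thesis using g h1 unfolding good_def by blast
      next
        case False then have "q = smin N" "\<not> s" using h1 by auto
        then show ?thesis using zin unfolding s_def by force
      qed
    qed
    have G2: "qmax N1 \<and> \<not> dub N1 \<longrightarrow> (\<exists>z\<in>ival N. f z \<le> smax N)"
    proof
      assume h: "qmax N1 \<and> \<not> dub N1"
      hence h1: "\<not> dub N" "\<not> (q = smax N \<and> \<not> s)" "qmax N \<or> q = smax N"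
        unfolding N1_def d_def qM_def by auto
      show "\<exists>z\<in>ival N. f z \<le> smax N"
      proof (cases "qmax N")
        case True then show ?thesis using g h1 unfolding good_def by blast
      next
        case False then have "q = smax N" "s" using h1 by auto
        then show ?thesis using zin unfolding s_def by force
      qed
    qed
    show ?thesis
    proof (cases "qm \<and> qM")
      case True
      show ?thesis
      proof (cases d)
        case True
        then show ?thesis using e \<open>qm \<and> qM\<close> G1 G2 rngN iv1 unfolding good_def N1_def ival_def ivlo_def ivhi_def
          by auto
      next
        case False
        then obtain z1 z2 where z1: "z1 \<in> ival N" "smin N \<le> f z1" and z2: "z2 \<in> ival N" "f z2 \<le> smax N"
          using G1 G2 \<open>qm \<and> qM\<close> unfolding N1_def by auto
        have A: "\<forall>u\<in>ival N. smin N - L * ivlen N \<le> f u \<and> f u \<le> smax N + L * ivlen N"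
          using lipN[OF _ z1(1)] lipN[OF _ z2(1)] z1(2) z2(2) by (smt (verit))
        show ?thesis using e \<open>qm \<and> qM\<close> False G1 G2 rngN A unfolding good_def N1_def ival_def ivlo_def ivhi_def
          by auto
      qed
    next
      case False
      then show ?thesis using e G1 G2 iv1 unfolding good_def N1_def by auto
    qed
  qed
qed


lemma contains_coords: "dep M = dep N \<Longrightarrow> idx M = idx N \<Longrightarrow> contains M z = contains N z"
  unfolding contains_def ivlo_def ivhi_def by simp

lemma contains_ival: "contains N z \<Longrightarrow> z \<le> 1 \<Longrightarrow> z \<in> ival N"
  unfolding contains_def ival_def by auto

lemma bound_ival:
  assumes "idx N < 2 ^ dep N" shows "ival N \<subseteq> {0..1}"
proof -
  have "real (Suc (idx N)) \<le> 2 ^ dep N"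
    using assms by (metis Suc_leI of_nat_le_iff of_nat_numeral of_nat_power)
  then show ?thesis unfolding ival_def ivlo_def ivhi_def by (auto simp: divide_simps)
qed

lemma children_bound: "idx N < 2 ^ dep N \<Longrightarrow> C \<in> set (children N) \<Longrightarrow> idx C < 2 ^ dep C"
  unfolding children_def by auto

lemma children_good: "C \<in> set (children N) \<Longrightarrow> good L f C"
  unfolding children_def good_def by auto

lemma children_contains:
  assumes "contains N z"
  shows "\<exists>C\<in>set (children N). contains C z"
proof -
  let ?d = "dep N" and ?i = "idx N"
  have pos: "(2::real) ^ ?d > 0" by simp
  define m where "m = real (2 * ?i + 1) / 2 ^ Suc ?d"
  have lo: "real (2 * ?i) / 2 ^ Suc ?d = ivlo N" unfolding ivlo_def by (simp add: divide_simps)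
  have hi: "real (Suc (2 * ?i + 1)) / 2 ^ Suc ?d = ivhi N" unfolding ivhi_def by (simp add: divide_simps)
  let ?C1 = "\<lparr>dep = Suc (dep N), idx = 2 * idx N, smin = ylo N, smax = yhi N, ylo = ylo N, yhi = yhi N,
       qmin = False, qmax = False, dub = False\<rparr>"
  let ?C2 = "\<lparr>dep = Suc (dep N), idx = 2 * idx N + 1, smin = ylo N, smax = yhi N, ylo = ylo N, yhi = yhi N,
       qmin = False, qmax = False, dub = False\<rparr>"
  have c1: "ivlo ?C1 = ivlo N" "ivhi ?C1 = m"
    using lo unfolding ivlo_def ivhi_def m_def by simp_all
  have c2: "ivlo ?C2 = m" "ivhi ?C2 = ivhi N"
    using hi unfolding ivlo_def ivhi_def m_def by simp_all
  show ?thesis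
  proof (cases "z < m")
    case True
    then have "contains ?C1 z" using assms c1 unfolding contains_def by simp
    then show ?thesis unfolding children_def by simp
  next
    case False
    then have "contains ?C2 z" using assms c2 unfolding contains_def by simp
    then show ?thesis unfolding children_def by simp
  qed
qed

lemma step_eq:
  assumes "find (\<lambda>N. contains N z) P = Some N0"
  shows "set (step L T f z cor ch P) =
    (\<Union>M\<in>set P. set (if (dep M, idx M) = (dep N0, idx N0)
        then (if snd (process L T f z cor ch N0) then children (fst (process L T f z cor ch N0))
              else [fst (process L T f z cor ch N0)]) else [M]))"
proof -
  obtain N' b where pb: "process L T f z cor ch N0 = (N', b)" by (cases "process L T f z cor ch N0")
  show ?thesis unfolding step_def assms option.case pb prod.case fst_conv snd_conv
    by (simp only: Let_def prod.case set_concat set_map image_image)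
qed

lemma step_mem:
  assumes "find (\<lambda>N. contains N z) P = Some N0"
    and "M' \<in> set (step L T f z cor ch P)"
  shows "(M' \<in> set P \<and> (dep M', idx M') \<noteq> (dep N0, idx N0)) \<or>
         (M' = fst (process L T f z cor ch N0)) \<or>
         (M' \<in> set (children (fst (process L T f z cor ch N0))))"
proof -
  from assms(2) obtain M where M: "M \<in> set P" and
    "M' \<in> set (if (dep M, idx M) = (dep N0, idx N0)
        then (if snd (process L T f z cor ch N0) then children (fst (process L T f z cor ch N0))
              else [fst (process L T f z cor ch N0)]) else [M])"
    unfolding step_eq[OF assms(1)] by blast
  then show ?thesis by (cases "(dep M, idx M) = (dep N0, idx N0)"; cases "snd (process L T f z cor ch N0)") auto
qed

lemma step_keep:
  assumes "find (\<lambda>N. contains N z) P = Some N0"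
    and "M \<in> set P" and "(dep M, idx M) \<noteq> (dep N0, idx N0)"
  shows "M \<in> set (step L T f z cor ch P)"
  unfolding step_eq[OF assms(1)] using assms(2,3) by (intro UN_I[of M]) auto

lemma step_same:
  assumes "find (\<lambda>N. contains N z) P = Some N0"
  shows "(\<not> snd (process L T f z cor ch N0) \<longrightarrow> fst (process L T f z cor ch N0) \<in> set (step L T f z cor ch P)) \<and>
         (snd (process L T f z cor ch N0) \<longrightarrow> set (children (fst (process L T f z cor ch N0))) \<subseteq> set (step L T f z cor ch P))"
proof -
  have N0: "N0 \<in> set P" using assms by (auto simp: find_Some_iff)
  show ?thesis unfolding step_eq[OF assms(1)] using N0 by auto
qed

definition clean :: "real \<Rightarrow> nat \<Rightarrow> (real \<Rightarrow> real) \<Rightarrow> (nat \<Rightarrow> real) \<Rightarrow> (nat \<Rightarrow> bool) \<Rightarrow> (nat \<Rightarrow> bool) \<Rightarrow> nat \<Rightarrow> node \<Rightarrow> bool" where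
  "clean L T f x c ch t N \<longleftrightarrow> (\<forall>s\<in>{1..t}. lies L T f x c ch s = (dep N, idx N) \<longrightarrow> \<not> c s)"

definition inv :: "real \<Rightarrow> nat \<Rightarrow> (real \<Rightarrow> real) \<Rightarrow> (nat \<Rightarrow> real) \<Rightarrow> (nat \<Rightarrow> bool) \<Rightarrow> (nat \<Rightarrow> bool) \<Rightarrow> nat \<Rightarrow> bool" where
  "inv L T f x c ch t \<longleftrightarrow>
     (\<forall>z\<in>{0..1}. \<exists>N\<in>set (run L T f x c ch t). contains N z) \<and>
     (\<forall>N\<in>set (run L T f x c ch t). idx N < 2 ^ dep N) \<and>
     (\<forall>N\<in>set (run L T f x c ch t). clean L T f x c ch t N \<longrightarrow> good L f N)"

lemma init_cover:
  assumes z: "z \<in> {0..1::real}"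
  shows "\<exists>N\<in>set (init_part L). contains N z"
proof -
  define k :: nat where "k = (if z = 1 then 7 else nat \<lfloor>8 * z\<rfloor>)"
  have k7: "k < 8"
  proof (cases "z = 1")
    case False
    then have "8 * z < 8" using z by auto
    then have "\<lfloor>8 * z\<rfloor> < 8" by linarith
    moreover have "0 \<le> \<lfloor>8 * z\<rfloor>" using z by simp
    ultimately have "nat \<lfloor>8 * z\<rfloor> < 8" by (simp add: nat_less_iff)
    then show ?thesis using False unfolding k_def by auto
  qed (simp add: k_def)
  have ck: "ivlo \<lparr>dep = 3, idx = k, smin = 0, smax = L, ylo = 0, yhi = L,
                             qmin = False, qmax = False, dub = False\<rparr> = real k / 8"
           "ivhi \<lparr>dep = 3, idx = k, smin = 0, smax = L, ylo = 0, yhi = L,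
                             qmin = False, qmax = False, dub = False\<rparr> = (real k + 1) / 8"
    unfolding ivlo_def ivhi_def by simp_all
  have "contains \<lparr>dep = 3, idx = k, smin = 0, smax = L, ylo = 0, yhi = L,
                             qmin = False, qmax = False, dub = False\<rparr> z"
  proof (cases "z = 1")
    case True
    then show ?thesis unfolding contains_def ivlo_def ivhi_def k_def by simp
  next
    case False
    have fl: "real k = of_int \<lfloor>8 * z\<rfloor>" using False z unfolding k_def by simp
    have "of_int \<lfloor>8 * z\<rfloor> \<le> 8 * z" "8 * z < of_int \<lfloor>8 * z\<rfloor> + 1" by linarith+
    then show ?thesis unfolding contains_def ck fl by (simp add: divide_simps mult.commute)
  qed
  then show ?thesis unfolding init_part_def using k7 by force
qed

lemma inv_run:
  assumes L: "L > 0"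
    and lip: "\<forall>u\<in>{0..1}. \<forall>v\<in>{0..1}. \<bar>f u - f v\<bar> \<le> L * \<bar>u - v\<bar>"
    and rng: "\<forall>u\<in>{0..1}. f u \<in> {0..L}"
    and xs: "\<forall>s\<in>{1..T}. x s \<in> {0..1}"
  shows "t \<le> T \<Longrightarrow> inv L T f x c ch t"
proof (induction t)
  case 0
  have "\<forall>N\<in>set (init_part L). idx N < 2 ^ dep N \<and> \<not> qmin N \<and> \<not> qmax N"
    unfolding init_part_def by auto
  then show ?case using init_cover unfolding inv_def good_def by auto
next
  case (Suc t)
  let ?P = "run L T f x c ch t"
  let ?z = "x (Suc t)"
  let ?pr = "process L T f ?z (c (Suc t)) (ch (Suc t))"
  have IH: "inv L T f x c ch t" using Suc by simp
  have z01: "?z \<in> {0..1}" using xs Suc.prems by simp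
  obtain N0 where fN0: "find (\<lambda>N. contains N ?z) ?P = Some N0"
    using IH z01 unfolding inv_def by (metis find_None_iff not_None_eq)
  have N0: "N0 \<in> set ?P" "contains N0 ?z" using fN0 by (auto simp: find_Some_iff)
  have zle: "?z \<le> 1" using z01 by simp
  have cur: "cur L T f x c ch (Suc t) = N0" unfolding cur_def using fN0 by simp
  have lies: "lies L T f x c ch (Suc t) = (dep N0, idx N0)" unfolding lies_def cur by simp
  have runS: "run L T f x c ch (Suc t) = step L T f ?z (c (Suc t)) (ch (Suc t)) ?P" by simp
  have co: "dep (fst (?pr N0)) = dep N0" "idx (fst (?pr N0)) = idx N0"
    using process_coords by blast+
  have bN0: "idx N0 < 2 ^ dep N0" using IH N0 unfolding inv_def by blast
  have cover: "\<forall>z\<in>{0..1}. \<exists>N\<in>set (run L T f x c ch (Suc t)). contains N z"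
  proof
    fix z :: real assume "z \<in> {0..1}"
    then obtain M where M: "M \<in> set ?P" "contains M z" using IH unfolding inv_def by blast
    show "\<exists>N\<in>set (run L T f x c ch (Suc t)). contains N z"
    proof (cases "(dep M, idx M) = (dep N0, idx N0)")
      case False
      then show ?thesis using step_keep[OF fN0 M(1) False] M(2) runS by metis
    next
      case True
      have cN: "contains (fst (?pr N0)) z" using contains_coords[OF co] M(2) True
        contains_coords[of M N0] by auto
      show ?thesis
      proof (cases "snd (?pr N0)")
        case False
        then show ?thesis using step_same[OF fN0] cN runS by metis
      next
        case True
        then show ?thesis using step_same[OF fN0] children_contains[OF cN] runS by (metis subsetD)
      qed
    qed
  qed
  have bound: "\<forall>N\<in>set (run L T f x c ch (Suc t)). idx N < 2 ^ dep N"
  proof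
    fix M' assume "M' \<in> set (run L T f x c ch (Suc t))"
    then have "M' \<in> set (step L T f ?z (c (Suc t)) (ch (Suc t)) ?P)" by simp
    from step_mem[OF fN0 this] show "idx M' < 2 ^ dep M'"
    proof (elim disjE conjE)
      assume "M' \<in> set ?P" then show ?thesis using IH unfolding inv_def by blast
    next
      assume "M' = fst (?pr N0)" then show ?thesis using co bN0 by simp
    next
      assume "M' \<in> set (children (fst (?pr N0)))"
      then show ?thesis using children_bound co bN0 by (metis)
    qed
  qed
  have goodS: "\<forall>N\<in>set (run L T f x c ch (Suc t)). clean L T f x c ch (Suc t) N \<longrightarrow> good L f N"
  proof (intro ballI impI)
    fix M' assume "M' \<in> set (run L T f x c ch (Suc t))" and cl: "clean L T f x c ch (Suc t) M'"
    then have "M' \<in> set (step L T f ?z (c (Suc t)) (ch (Suc t)) ?P)" by simp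
    from step_mem[OF fN0 this] show "good L f M'"
    proof (elim disjE conjE)
      assume "M' \<in> set ?P" and ne: "(dep M', idx M') \<noteq> (dep N0, idx N0)"
      have "clean L T f x c ch t M'" using cl unfolding clean_def by auto
      then show ?thesis using IH \<open>M' \<in> set ?P\<close> unfolding inv_def by blast
    next
      assume eq: "M' = fst (?pr N0)"
      have cl0: "clean L T f x c ch t N0" using cl co unfolding eq clean_def by auto
      have nc: "\<not> c (Suc t)" using cl co lies unfolding eq clean_def by auto
      have g0: "good L f N0" using IH N0 cl0 unfolding inv_def by blast
      show ?thesis unfolding eq
        by (rule process_good[OF L lip rng bound_ival[OF bN0] contains_ival[OF N0(2) zle] g0 nc])
    next
      assume "M' \<in> set (children (fst (?pr N0)))"
      then show ?thesis by (rule children_good)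
    qed
  qed
  show ?case using cover bound goodS unfolding inv_def by blast
qed

theorem lemma22:
  fixes L :: real and T C t :: nat and f :: "real \<Rightarrow> real"
    and x :: "nat \<Rightarrow> real" and c ch :: "nat \<Rightarrow> bool"
  assumes "L > 0" and "T \<ge> 2"
    and "\<forall>u\<in>{0..1}. \<forall>v\<in>{0..1}. \<bar>f u - f v\<bar> \<le> L * \<bar>u - v\<bar>"
    and "\<forall>u\<in>{0..1}. f u \<in> {0..L}"
    and "\<forall>s\<in>{1..T}. x s \<in> {0..1}"
    and "card {s\<in>{1..T}. c s} \<le> C"
    and "t \<in> {1..T}"
    and "correcting_iv L T f x c ch (lies L T f x c ch t)"
    and "snd (upd L T f x c ch t)"
  shows "f ` ival (cur L T f x c ch t) \<subseteq>
           {ylo (fst (upd L T f x c ch t)) .. yhi (fst (upd L T f x c ch t))}"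
proof -
  obtain t' where t': "t = Suc t'" using assms(7) by (cases t) auto
  have tT: "t' \<le> T" using assms(7) t' by simp
  have IH: "inv L T f x c ch t'" using inv_run[OF assms(1) assms(3) assms(4) assms(5) tT] .
  let ?P = "run L T f x c ch t'"
  let ?z = "x t"
  have z01: "?z \<in> {0..1}" using assms(5,7) by simp
  obtain N0 where fN0: "find (\<lambda>N. contains N ?z) ?P = Some N0"
    using IH z01 unfolding inv_def by (metis find_None_iff not_None_eq)
  have N0: "N0 \<in> set ?P" "contains N0 ?z" using fN0 by (auto simp: find_Some_iff)
  have zle: "?z \<le> 1" using z01 by simp
  have cur: "cur L T f x c ch t = N0" unfolding cur_def using fN0 t' by simp
  have lies: "lies L T f x c ch t = (dep N0, idx N0)" unfolding lies_def cur by simp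
  have allc: "\<forall>s\<in>{1..T}. lies L T f x c ch s = (dep N0, idx N0) \<longrightarrow> \<not> c s"
    using assms(8) lies unfolding correcting_iv_def by simp
  have cl0: "clean L T f x c ch t' N0" using allc tT unfolding clean_def by auto
  have nc: "\<not> c t" using allc assms(7) lies by auto
  have bN0: "idx N0 < 2 ^ dep N0" using IH N0 unfolding inv_def by blast
  have g0: "good L f N0" using IH N0 cl0 unfolding inv_def by blast
  let ?N' = "fst (process L T f ?z (c t) (ch t) N0)"
  have upd: "upd L T f x c ch t = process L T f ?z (c t) (ch t) N0" unfolding upd_def cur ..
  have g': "good L f ?N'"
    by (rule process_good[OF assms(1) assms(3) assms(4) bound_ival[OF bN0] contains_ival[OF N0(2) zle] g0 nc])
  have fl: "qmin N0 \<and> qmax N0" using process_nobis assms(9) unfolding upd by blast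
  have fl': "qmin ?N' \<and> qmax ?N'" using process_flags[OF fl] by blast
  have iv: "ival ?N' = ival N0" using process_coords ival_coords by metis
  show ?thesis using g' fl' iv unfolding good_def upd cur by auto
qed

end
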